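(* Let $0<p\le\infty$. Equip $\mathcal{L}^p(I)\times\mathcal{L}^p(I)$ with the norm $\|(f,b)\|:=\|f\|_p+\|b\|_p$ if $1\le p\le\infty$, and with the metric $d((f,b),(f',b')):=d_p(f,f')+d_p(b,b')$ if $0<p<1$. Then the fractal convolution operator $\mathcal{P}:\mathcal{L}^p(I)\times\mathcal{L}^p(I)\to\mathcal{L}^p(I)$, $\mathcal{P}(f,b):=f*_T b$, is linear and bounded.
   Context: Let $N\ge 2$, $I=[x_0,x_N]\subset\mathbb{R}$ a nonempty interval and $\Delta: x_0<x_1<\dots<x_N$ a partition of $I$. For $n=1,\dots,N$ let $L_n(x)=a_nx+b_n$ be the affine map with $L_n(x_0)=x_{n-1}$, $L_n(x_N)=x_n$; set $I_1=[x_0,x_1]$ and $I_n=(x_{n-1},x_n]$ for $n=2,\dots,N$. Let $\alpha=(\alpha_1,\dots,\alpha_N)\in(\mathcal{L}^\infty(I))^N$ (scale functions) with $\Lambda:=\operatorname{ess\,sup}\{|\alpha_n(x)|: x\in I,\ n=1,\dots,N\}<1$. For $1\le p\le\infty$, $\mathcal{L}^p(I)$ carries the usual norm $\|\cdot\|_p$; for $0<p<1$ it carries the complete translation-invariant metric $d_p(g,h)=\int_I|g-h|^p\,dx$. For $f,b\in\mathcal{L}^p(I)$ the operator $Tg(x):=f(x)+\alpha_n(L_n^{-1}(x))\,(g-b)(L_n^{-1}(x))$ for $x\in I_n$, $n=1,\dots,N$, is a contraction on $\mathcal{L}^p(I)$ with a unique fixed point, denoted $f*_T b$ and called the fractal convolution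 of the seed function $f$ with the base function $b$. Equivalently, $f*_Tb$ is the unique element of $\mathcal{L}^p(I)$ with $(f*_Tb)(x)=f(x)+\alpha_n(L_n^{-1}(x))\,((f*_Tb)-b)(L_n^{-1}(x))$ for $x\in I_n$, $n=1,\dots,N$. The partition, the maps $L_n$ and $\alpha$ are fixed throughout. *)

theory Defs
  imports "HOL-Analysis.Analysis" "HOL-Probability.Essential_Supremum"
begin

abbreviation Ival :: "nat \<Rightarrow> (nat \<Rightarrow> real) \<Rightarrow> real set" where
  "Ival N xs \<equiv> {xs 0..xs N}"

text \<open>The affine map L_n with L_n(x_0) = x_{n-1}, L_n(x_N) = x_n, and its inverse.\<close>
definition Lmap :: "nat \<Rightarrow> (nat \<Rightarrow> real) \<Rightarrow> nat \<Rightarrow> real \<Rightarrow> real" where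
  "Lmap N xs n t = xs (n - 1) + (xs n - xs (n - 1)) / (xs N - xs 0) * (t - xs 0)"

definition Linv :: "nat \<Rightarrow> (nat \<Rightarrow> real) \<Rightarrow> nat \<Rightarrow> real \<Rightarrow> real" where
  "Linv N xs n y = xs 0 + (xs N - xs 0) / (xs n - xs (n - 1)) * (y - xs (n - 1))"

definition piece :: "(nat \<Rightarrow> real) \<Rightarrow> nat \<Rightarrow> real set" where
  "piece xs n = (if n = 1 then {xs 0..xs 1} else {xs (n - 1)<..xs n})"

text \<open>L^p(I) membership (functions; elements of L^p are their a.e.-classes).
  p = \<infinity> means essentially bounded.\<close>
definition Lp_space :: "ennreal \<Rightarrow> real set \<Rightarrow> (real \<Rightarrow> real) set" where
  "Lp_space p I = {g. g \<in> borel_measurable (lebesgue_on I) \<and>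
     (if p = \<infinity> then (\<exists>B. AE x in lebesgue_on I. \<bar>g x\<bar> \<le> B)
      else integrable (lebesgue_on I) (\<lambda>x. \<bar>g x\<bar> powr enn2real p))}"

text \<open>Lp_size p I g = ||g||_p for 1 <= p <= \<infinity>, and = d_p(g,0) = \<integral>|g|^p for 0 < p < 1.\<close>
definition Lp_size :: "ennreal \<Rightarrow> real set \<Rightarrow> (real \<Rightarrow> real) \<Rightarrow> real" where
  "Lp_size p I g =
     (if p = \<infinity> then real_of_ereal (esssup (lebesgue_on I) (\<lambda>x. ereal \<bar>g x\<bar>))
      else if 1 \<le> p then (\<integral>x. \<bar>g x\<bar> powr enn2real p \<partial>lebesgue_on I) powr (1 / enn2real p)
      else (\<integral>x. \<bar>g x\<bar> powr enn2real p \<partial>lebesgue_on I))"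

definition fcT :: "nat \<Rightarrow> (nat \<Rightarrow> real) \<Rightarrow> (nat \<Rightarrow> real \<Rightarrow> real)
    \<Rightarrow> (real \<Rightarrow> real) \<Rightarrow> (real \<Rightarrow> real) \<Rightarrow> (real \<Rightarrow> real) \<Rightarrow> real \<Rightarrow> real" where
  "fcT N xs \<alpha> f b g y = f y + (\<Sum>n=1..N. indicator (piece xs n) y *
      (\<alpha> n (Linv N xs n y) * (g (Linv N xs n y) - b (Linv N xs n y))))"

text \<open>Fractal convolution f *_T b: the (a.e.-unique) fixed point of T in L^p(I).\<close>
definition frac_conv :: "ennreal \<Rightarrow> nat \<Rightarrow> (nat \<Rightarrow> real) \<Rightarrow> (nat \<Rightarrow> real \<Rightarrow> real)
    \<Rightarrow> (real \<Rightarrow> real) \<Rightarrow> (real \<Rightarrow> real) \<Rightarrow> real \<Rightarrow> real" where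
  "frac_conv p N xs \<alpha> f b = (SOME h. h \<in> Lp_space p (Ival N xs) \<and>
      (AE y in lebesgue_on (Ival N xs). h y = fcT N xs \<alpha> f b h y))"

end

theory Submission
  imports Defs
begin

lemma aff_meas: "(c::real) \<noteq> 0 \<Longrightarrow> (\<lambda>x::real. t + c * x) \<in> lebesgue \<rightarrow>\<^sub>M lebesgue"
  using lebesgue_affine_measurable[where c="\<lambda>_. c" and t=t] by simp

lemma ineq_two:
  fixes x y q :: real assumes "0 \<le> x" "0 \<le> y" "0 < q"
  shows "(x + y) powr q \<le> 2 powr q * (x powr q + y powr q)"
proof -
  have "(x + y) powr q \<le> (2 * max x y) powr q"
    using assms by (intro powr_mono2) auto
  also have "\<dots> = 2 powr q * (max x y) powr q" using assms by (simp add: powr_mult)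
  also have "\<dots> \<le> 2 powr q * (x powr q + y powr q)"
    using assms by (intro mult_left_mono) (auto simp: max_def)
  finally show ?thesis .
qed

lemma ineq_contr:
  fixes a z q L :: real assumes a: "0 \<le> a" and z: "0 \<le> z" and q: "0 < q" and L: "0 < L" "L < 1"
  shows "(a + L * z) powr q \<le> (1 + 2 / (1 - L)) powr q * a powr q + ((1 + L) / 2) powr q * z powr q"
proof (cases "a \<le> (1 - L) / 2 * z")
  case True
  have "(a + L * z) powr q \<le> ((1 + L) / 2 * z) powr q"
    using True a z L q by (intro powr_mono2) (auto simp: field_simps)
  also have "\<dots> = ((1 + L) / 2) powr q * z powr q" by (rule powr_mult; use L z in auto)
  also have "\<dots> \<le> (1 + 2 / (1 - L)) powr q * a powr q + ((1 + L) / 2) powr q * z powr q"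
    by simp
  finally show ?thesis .
next
  case False
  then have "z \<le> a * (2 / (1 - L))" using L by (simp add: field_simps)
  moreover have "L * z \<le> z" using L z by (intro mult_left_le_one_le) auto
  ultimately have "L * z \<le> a * (2 / (1 - L))" by linarith
  then have "(a + L * z) powr q \<le> (a * (1 + 2 / (1 - L))) powr q"
    using a z L q by (intro powr_mono2) (auto simp: field_simps)
  also have "\<dots> = (1 + 2 / (1 - L)) powr q * a powr q" using L a by (simp add: powr_mult)
  also have "\<dots> \<le> (1 + 2 / (1 - L)) powr q * a powr q + ((1 + L) / 2) powr q * z powr q"
    by simp
  finally show ?thesis .
qed

lemma theta_lt1: "0 < L \<Longrightarrow> L < 1 \<Longrightarrow> 0 < q \<Longrightarrow> ((1 + L) / 2) powr q < (1::real)"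
  using powr_less_mono2[of q "(1 + L) / 2" 1] by simp


lemma telesc: "(\<Sum>n=1..(k::nat). g n - g (n - 1)) = g k - (g 0 :: real)"
  by (induction k) (auto simp: atLeastAtMostSuc_conv)

locale fcs =
  fixes N :: nat and xs :: "nat \<Rightarrow> real" and \<alpha> :: "nat \<Rightarrow> real \<Rightarrow> real" and \<Lambda> :: real
  assumes N2: "2 \<le> N" and incr: "\<And>n. n < N \<Longrightarrow> xs n < xs (Suc n)"
    and \<alpha>meas: "\<And>n. n \<in> {1..N} \<Longrightarrow> \<alpha> n \<in> borel_measurable (lebesgue_on {xs 0..xs N})"
    and \<Lambda>pos: "0 < \<Lambda>" and \<Lambda>1: "\<Lambda> < 1"
    and \<alpha>bd: "\<And>n. n \<in> {1..N} \<Longrightarrow> AE t in lebesgue_on {xs 0..xs N}. \<bar>\<alpha> n t\<bar> \<le> \<Lambda>"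
begin

abbreviation "I \<equiv> {xs 0..xs N}"
abbreviation "M \<equiv> lebesgue_on I"

definition E :: "real \<Rightarrow> real" where
  "E y = (\<Sum>n=1..N. indicator (piece xs n) y * Linv N xs n y)"
definition \<beta> :: "real \<Rightarrow> real" where
  "\<beta> y = (\<Sum>n=1..N. indicator (piece xs n) y * \<alpha> n (E y))"

lemma mono_lt: "i < j \<Longrightarrow> j \<le> N \<Longrightarrow> xs i < xs j"
proof (induction j)
  case 0 then show ?case by simp
next
  case (Suc j)
  show ?case
  proof (cases "i = j")
    case True then show ?thesis using incr Suc by simp
  next
    case False then have "xs i < xs j" using Suc by simp
    also have "xs j < xs (Suc j)" using incr Suc by simp
    finally show ?thesis .
  qed
qed

lemma mono_le: "i \<le> j \<Longrightarrow> j \<le> N \<Longrightarrow> xs i \<le> xs j"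
  using mono_lt[of i j] by (cases "i = j") auto

lemma a_lt_b: "xs 0 < xs N" using mono_lt N2 by simp

lemma piece_sub: "n \<in> {1..N} \<Longrightarrow> piece xs n \<subseteq> {xs (n-1)..xs n}"
  by (auto simp: piece_def)

lemma piece_subI: "n \<in> {1..N} \<Longrightarrow> piece xs n \<subseteq> I"
proof -
  assume n: "n \<in> {1..N}"
  have "xs 0 \<le> xs (n-1)" "xs n \<le> xs N" using n mono_le by auto
  then show ?thesis using piece_sub[OF n] by auto
qed

lemma piece_lower: "n \<in> {1..N} \<Longrightarrow> y \<in> piece xs n \<Longrightarrow> n \<ge> 2 \<Longrightarrow> xs (n-1) < y"
  by (auto simp: piece_def)

lemma piece_disj: "n \<in> {1..N} \<Longrightarrow> m \<in> {1..N} \<Longrightarrow> y \<in> piece xs n \<Longrightarrow> y \<in> piece xs m \<Longrightarrow> n = m"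
proof (rule ccontr)
  assume n: "n \<in> {1..N}" and m: "m \<in> {1..N}" and yn: "y \<in> piece xs n" and ym: "y \<in> piece xs m" and ne: "n \<noteq> m"
  have key: "False" if a: "a \<in> {1..N}" "c \<in> {1..N}" "a < c" "y \<in> piece xs a" "y \<in> piece xs c" for a c
  proof -
    have "y \<le> xs a" using piece_sub[OF a(1)] a(4) by auto
    moreover have "xs a \<le> xs (c - 1)" using a by (intro mono_le) auto
    moreover have "xs (c-1) < y" using piece_lower[OF a(2) a(5)] a by auto
    ultimately show False by simp
  qed
  show False using ne key[OF n m _ yn ym] key[OF m n _ ym yn] by linarith
qed

lemma piece_cover: "y \<in> I \<Longrightarrow> \<exists>n\<in>{1..N}. y \<in> piece xs n"
proof -
  assume y: "y \<in> I"
  show ?thesis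
  proof (cases "y \<le> xs 1")
    case True then show ?thesis using y N2 by (intro bexI[of _ 1]) (auto simp: piece_def)
  next
    case False
    define m where "m = (LEAST m. y \<le> xs m)"
    have ex: "y \<le> xs N" using y by auto
    have m1: "y \<le> xs m" unfolding m_def by (rule LeastI[of _ N]) (rule ex)
    have m2: "m \<le> N" unfolding m_def by (rule Least_le) (rule ex)
    have "xs 0 < xs 1" using mono_lt[of 0 1] N2 by simp
    then have m3: "m \<ge> 2" using m1 False y
      by (cases m; cases "m - 1") auto
    have "\<not> y \<le> xs (m - 1)" unfolding m_def
      using m3 not_less_Least[of "m-1" "\<lambda>m. y \<le> xs m"] m_def by auto
    then show ?thesis using m1 m2 m3 by (intro bexI[of _ m]) (auto simp: piece_def)
  qed
qed

lemma sum_piece: "m \<in> {1..N} \<Longrightarrow> y \<in> piece xs m \<Longrightarrow>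
   (\<Sum>n=1..N. indicator (piece xs n) y * F n) = (F m :: real)"
proof -
  assume m: "m \<in> {1..N}" and y: "y \<in> piece xs m"
  have "(\<Sum>n=1..N. indicator (piece xs n) y * F n) = (\<Sum>n=1..N. if n = m then F n else 0)"
  proof (intro sum.cong refl)
    fix n assume n: "n \<in> {1..N}"
    show "indicator (piece xs n) y * F n = (if n = m then F n else 0)"
    proof (cases "n = m")
      case True then show ?thesis using y by simp
    next
      case False then have "y \<notin> piece xs n" using piece_disj[OF n m _ y] by blast
      then show ?thesis using False by simp
    qed
  qed
  also have "\<dots> = F m" using m by (simp add: sum.delta)
  finally show ?thesis .
qed

lemma sum_nopiece: "(\<And>n. n \<in> {1..N} \<Longrightarrow> y \<notin> piece xs n) \<Longrightarrow>
   (\<Sum>n=1..N. indicator (piece xs n) y * F n) = (0::real)"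
  by (intro sum.neutral) auto

lemma E_piece: "m \<in> {1..N} \<Longrightarrow> y \<in> piece xs m \<Longrightarrow> E y = Linv N xs m y"
  unfolding E_def by (rule sum_piece)

lemma \<beta>_piece: "m \<in> {1..N} \<Longrightarrow> y \<in> piece xs m \<Longrightarrow> \<beta> y = \<alpha> m (E y)"
  unfolding \<beta>_def by (rule sum_piece)

lemma Linv_mem: "m \<in> {1..N} \<Longrightarrow> y \<in> {xs (m-1)..xs m} \<Longrightarrow> Linv N xs m y \<in> I"
proof -
  assume m: "m \<in> {1..N}" and y: "y \<in> {xs (m-1)..xs m}"
  have d: "xs (m-1) < xs m" using m by (intro mono_lt) auto
  have ab: "xs 0 < xs N" by (rule a_lt_b)
  have "0 \<le> (xs N - xs 0) / (xs m - xs (m - 1)) * (y - xs (m - 1))"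
    using d ab y by (intro mult_nonneg_nonneg divide_nonneg_nonneg) auto
  moreover have "(xs N - xs 0) / (xs m - xs (m - 1)) * (y - xs (m - 1)) \<le> (xs N - xs 0) / (xs m - xs (m - 1)) * (xs m - xs (m - 1))"
    using d ab y by (intro mult_left_mono) auto
  ultimately show ?thesis using d unfolding Linv_def by auto
qed

lemma E_in: "y \<in> I \<Longrightarrow> E y \<in> I"
proof -
  assume "y \<in> I"
  then obtain m where m: "m \<in> {1..N}" "y \<in> piece xs m" using piece_cover by blast
  show ?thesis using E_piece[OF m] Linv_mem[OF m(1)] piece_sub[OF m(1)] m(2) by auto
qed

lemma fcT_eq: "fcT N xs \<alpha> f b g y = f y + \<beta> y * (g (E y) - b (E y))"
proof (cases "\<exists>m\<in>{1..N}. y \<in> piece xs m")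
  case True
  then obtain m where m: "m \<in> {1..N}" "y \<in> piece xs m" by blast
  show ?thesis unfolding fcT_def
    using sum_piece[OF m, of "\<lambda>n. \<alpha> n (Linv N xs n y) * (g (Linv N xs n y) - b (Linv N xs n y))"]
      \<beta>_piece[OF m] E_piece[OF m] by simp
next
  case False
  then have "\<beta> y = 0" unfolding \<beta>_def by (intro sum_nopiece) auto
  with False show ?thesis unfolding fcT_def by (simp add: sum_nopiece)
qed


lemma I_sets[simp]: "I \<in> sets lebesgue" by simp
lemma space_M[simp]: "space M = I" by simp
lemma sets_M: "A \<in> sets M \<longleftrightarrow> A \<subseteq> I \<and> A \<in> sets lebesgue"
  by (rule sets_restrict_space_iff) simp

lemma singleton_null: "{p::real} \<in> null_sets lebesgue"
  using countable_imp_null_set_lborel[of "{p}"] by (simp add: null_sets_completionI)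

definition cf :: "nat \<Rightarrow> real" where "cf n = (xs N - xs 0) / (xs n - xs (n - 1))"

lemma cf_pos: "n \<in> {1..N} \<Longrightarrow> 0 < cf n"
  unfolding cf_def using a_lt_b mono_lt[of "n-1" n] by auto

lemma Linv_cf: "Linv N xs n y = xs 0 + cf n * (y - xs (n-1))"
  unfolding Linv_def cf_def by simp

lemma Linv_aff: "Linv N xs n = (\<lambda>y. (xs 0 - cf n * xs (n-1)) + cf n * y)"
  unfolding fun_eq_iff Linv_cf by (simp add: algebra_simps)

lemma Linv_meas: "n \<in> {1..N} \<Longrightarrow> Linv N xs n \<in> lebesgue \<rightarrow>\<^sub>M lebesgue"
  unfolding Linv_aff using cf_pos by (intro aff_meas) (metis less_irrefl)

lemma Linv_vimage:
  assumes n: "n \<in> {1..N}" and S: "S \<in> sets lebesgue"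
  shows "emeasure lebesgue (Linv N xs n -` S) = ennreal (1 / cf n) * emeasure lebesgue S"
proof -
  let ?c = "cf n" and ?t = "xs 0 - cf n * xs (n-1)"
  have c: "?c > 0" using cf_pos[OF n] .
  have "emeasure lebesgue S = (\<integral>\<^sup>+x. indicator S x \<partial>lebesgue)" using S by simp
  also have "\<dots> = ennreal \<bar>?c\<bar> * (\<integral>\<^sup>+x. indicator S (?t + ?c * x) \<partial>lebesgue)"
    using c S by (intro nn_integral_real_affine_lebesgue) auto
  also have "(\<lambda>x. indicator S (?t + ?c * x) :: ennreal) = indicator (Linv N xs n -` S)"
    unfolding Linv_aff by (auto simp: fun_eq_iff indicator_def)
  also have "integral\<^sup>N lebesgue (indicator (Linv N xs n -` S)) = emeasure lebesgue (Linv N xs n -` S)"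
    using measurable_sets[OF Linv_meas[OF n] S] by simp
  finally have eq: "emeasure lebesgue S = ennreal ?c * emeasure lebesgue (Linv N xs n -` S)"
    using c by simp
  have "ennreal (1 / ?c) * emeasure lebesgue S = (ennreal (1/ ?c) * ennreal ?c) * emeasure lebesgue (Linv N xs n -` S)"
    by (simp add: eq mult.assoc)
  also have "ennreal (1/ ?c) * ennreal ?c = 1" using c by (simp add: ennreal_mult[symmetric])
  finally show ?thesis by simp
qed

lemma Linv_vimage_sub:
  assumes n: "n \<in> {1..N}" shows "Linv N xs n -` I \<subseteq> {xs (n-1)..xs n}"
proof
  fix y assume y: "y \<in> Linv N xs n -` I"
  have d: "xs (n-1) < xs n" using n mono_lt[of "n-1" n] by auto
  have c: "cf n > 0" using cf_pos[OF n] .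
  have "xs 0 \<le> xs 0 + cf n * (y - xs (n-1))" "xs 0 + cf n * (y - xs (n-1)) \<le> xs N"
    using y unfolding Linv_aff by (auto simp: algebra_simps)
  then have 1: "0 \<le> cf n * (y - xs (n-1))" and 2: "cf n * (y - xs (n-1)) \<le> xs N - xs 0" by auto
  from 1 c have "y \<ge> xs (n-1)" by (simp add: zero_le_mult_iff)
  moreover have "cf n * (y - xs (n-1)) \<le> cf n * (xs n - xs (n-1))"
    using 2 d unfolding cf_def by simp
  then have "y - xs (n-1) \<le> xs n - xs (n-1)" using c by simp
  ultimately show "y \<in> {xs (n-1)..xs n}" by simp
qed

lemma piece_sets[simp]: "piece xs n \<in> sets lebesgue"
  unfolding piece_def by simp

lemma piece_vimage:
  assumes n: "n \<in> {1..N}" and S: "S \<in> sets M"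
  shows "emeasure lebesgue (piece xs n \<inter> Linv N xs n -` S) = ennreal (1 / cf n) * emeasure lebesgue S"
proof -
  let ?V = "Linv N xs n -` S"
  have SI: "S \<subseteq> I" "S \<in> sets lebesgue" using S sets_M by auto
  have V: "?V \<in> sets lebesgue" using measurable_sets[OF Linv_meas[OF n] SI(2)] by simp
  have Vsub: "?V \<subseteq> {xs (n-1)..xs n}" using Linv_vimage_sub[OF n] SI(1) by auto
  have "?V - {xs (n-1)} \<subseteq> piece xs n \<inter> ?V" using Vsub by (auto simp: piece_def)
  then have "emeasure lebesgue (?V - {xs (n-1)}) \<le> emeasure lebesgue (piece xs n \<inter> ?V)"
    using V by (intro emeasure_mono) auto
  moreover have "emeasure lebesgue (?V - {xs (n-1)}) = emeasure lebesgue ?V"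
    using V singleton_null by (intro emeasure_Diff_null_set) auto
  moreover have "emeasure lebesgue (piece xs n \<inter> ?V) \<le> emeasure lebesgue ?V"
    using V by (intro emeasure_mono) auto
  ultimately have "emeasure lebesgue (piece xs n \<inter> ?V) = emeasure lebesgue ?V" by simp
  then show ?thesis using Linv_vimage[OF n SI(2)] by simp
qed

lemma E_vimage: "E -` S \<inter> I = (\<Union>n\<in>{1..N}. piece xs n \<inter> Linv N xs n -` S)"
proof (intro equalityI subsetI)
  fix y assume "y \<in> E -` S \<inter> I"
  then have y: "E y \<in> S" "y \<in> I" by auto
  then obtain m where m: "m \<in> {1..N}" "y \<in> piece xs m" using piece_cover by blast
  then show "y \<in> (\<Union>n\<in>{1..N}. piece xs n \<inter> Linv N xs n -` S)" using E_piece[OF m] y by auto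
next
  fix y assume "y \<in> (\<Union>n\<in>{1..N}. piece xs n \<inter> Linv N xs n -` S)"
  then obtain n where n: "n \<in> {1..N}" "y \<in> piece xs n" "Linv N xs n y \<in> S" by auto
  have "E y \<in> S" using E_piece[OF n(1,2)] n(3) by auto
  moreover have "y \<in> I" using piece_subI[OF n(1)] n(2) by blast
  ultimately show "y \<in> E -` S \<inter> I" by simp
qed

lemma E_meas: "E \<in> M \<rightarrow>\<^sub>M M"
proof (rule measurableI)
  fix x assume "x \<in> space M" then show "E x \<in> space M" using E_in by simp
next
  fix A assume A: "A \<in> sets M"
  then have A': "A \<in> sets lebesgue" using sets_M by auto
  have "(\<Union>n\<in>{1..N}. piece xs n \<inter> Linv N xs n -` A) \<in> sets lebesgue"
    using measurable_sets[OF Linv_meas A'] by (intro sets.finite_UN sets.Int) auto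
  moreover have "(\<Union>n\<in>{1..N}. piece xs n \<inter> Linv N xs n -` A) \<subseteq> I"
  proof (intro UN_least)
    fix n assume "n \<in> {1..N}"
    show "piece xs n \<inter> Linv N xs n -` A \<subseteq> I" using piece_subI[OF \<open>n \<in> {1..N}\<close>] by blast
  qed
  ultimately show "E -` A \<inter> space M \<in> sets M" using E_vimage sets_M by simp
qed

lemma sum_cf: "(\<Sum>n=1..N. 1 / cf n) = 1"
proof -
  have "(\<Sum>n=1..N. 1 / cf n) = (\<Sum>n=1..N. (xs n - xs (n-1)) / (xs N - xs 0))"
    unfolding cf_def by simp
  also have "\<dots> = (\<Sum>n=1..N. xs n - xs (n-1)) / (xs N - xs 0)" by (simp add: sum_divide_distrib)
  also have "\<dots> = 1" using telesc[of xs N] a_lt_b by simp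
  finally show ?thesis .
qed

lemma distr_E: "distr M M E = M"
proof (rule measure_eqI)
  show "sets (distr M M E) = sets M" by simp
next
  fix A assume "A \<in> sets (distr M M E)"
  then have A: "A \<in> sets M" by simp
  have "emeasure (distr M M E) A = emeasure M (E -` A \<inter> I)"
    using A E_meas by (simp add: emeasure_distr)
  also have "\<dots> = emeasure lebesgue (E -` A \<inter> I)"
    by (intro emeasure_restrict_space) auto
  also have "\<dots> = (\<Sum>n\<in>{1..N}. emeasure lebesgue (piece xs n \<inter> Linv N xs n -` A))"
    unfolding E_vimage
  proof (rule sum_emeasure[symmetric])
    show "(\<lambda>n. piece xs n \<inter> Linv N xs n -` A) ` {1..N} \<subseteq> sets lebesgue"
      using measurable_sets[OF Linv_meas] A sets_M by auto
    show "disjoint_family_on (\<lambda>n. piece xs n \<inter> Linv N xs n -` A) {1..N}"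
      unfolding disjoint_family_on_def using piece_disj by blast
  qed simp
  also have "\<dots> = (\<Sum>n\<in>{1..N}. ennreal (1 / cf n) * emeasure lebesgue A)"
    using piece_vimage A by simp
  also have "\<dots> = ennreal (\<Sum>n\<in>{1..N}. 1 / cf n) * emeasure lebesgue A"
    using cf_pos by (subst sum_ennreal[symmetric]) (auto simp: sum_distrib_right less_imp_le)
  also have "\<dots> = emeasure M A" using sum_cf A sets_M by (simp add: emeasure_restrict_space)
  finally show "emeasure (distr M M E) A = emeasure M A" .
qed

lemma AE_E: "AE x in M. P x \<Longrightarrow> AE y in M. P (E y)"
proof -
  assume "AE x in M. P x"
  then have "AE x in distr M M E. P x" by (simp only: distr_E)
  then show ?thesis by (rule AE_distrD[OF E_meas])
qed

lemma AE_Epow: "AE x in M. P x \<Longrightarrow> AE y in M. P ((E ^^ k) y)"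
proof (induction k arbitrary: P)
  case 0 then show ?case by simp
next
  case (Suc k)
  have "AE y in M. P ((E ^^ k) y)" using Suc by blast
  then have "AE y in M. P ((E ^^ k) (E y))" by (rule AE_E)
  then show ?case by (simp only: funpow_Suc_right comp_apply)
qed

lemma nn_E: "G \<in> borel_measurable M \<Longrightarrow> (\<integral>\<^sup>+y. G (E y) \<partial>M) = (\<integral>\<^sup>+y. G y \<partial>M)"
  using nn_integral_distr[OF E_meas, of G] distr_E by simp

lemma Epow_meas: "E ^^ k \<in> M \<rightarrow>\<^sub>M M"
  by (rule measurable_compose_n[OF E_meas])

lemma ind_piece_meas: "indicator (piece xs n) \<in> borel_measurable M"
  by (intro measurable_restrict_space1 borel_measurable_indicator) simp

lemma \<beta>_meas: "\<beta> \<in> borel_measurable M"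
proof -
  have "(\<lambda>y. indicator (piece xs n) y * \<alpha> n (E y)) \<in> borel_measurable M" if "n \<in> {1..N}" for n
    using ind_piece_meas measurable_compose[OF E_meas \<alpha>meas[OF that]] by (intro borel_measurable_times) auto
  then show ?thesis unfolding \<beta>_def[abs_def] by (intro borel_measurable_sum) auto
qed

lemma \<beta>_bd: "AE y in M. \<bar>\<beta> y\<bar> \<le> \<Lambda>"
proof -
  have "AE t in M. \<forall>n\<in>{1..N}. \<bar>\<alpha> n t\<bar> \<le> \<Lambda>" by (intro AE_finite_allI \<alpha>bd) auto
  then have "AE y in M. \<forall>n\<in>{1..N}. \<bar>\<alpha> n (E y)\<bar> \<le> \<Lambda>" by (rule AE_E)
  then show ?thesis
  proof (rule AE_mp[OF _ AE_I2], intro impI)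
    fix y assume y: "y \<in> space M" and h: "\<forall>n\<in>{1..N}. \<bar>\<alpha> n (E y)\<bar> \<le> \<Lambda>"
    have "y \<in> I" using y by simp
    then obtain m where m: "m \<in> {1..N}" "y \<in> piece xs m" using piece_cover by blast
    show "\<bar>\<beta> y\<bar> \<le> \<Lambda>" using \<beta>_piece[OF m] h m by simp
  qed
qed


definition nnq :: "real \<Rightarrow> (real \<Rightarrow> real) \<Rightarrow> ennreal" where
  "nnq q g = (\<integral>\<^sup>+y. ennreal (\<bar>g y\<bar> powr q) \<partial>M)"
definition c1 :: "real \<Rightarrow> real" where "c1 q = (1 + 2 / (1 - \<Lambda>)) powr q"
definition th :: "real \<Rightarrow> real" where "th q = ((1 + \<Lambda>) / 2) powr q"

lemma th_lt1: "0 < q \<Longrightarrow> th q < 1"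
  unfolding th_def using theta_lt1 \<Lambda>pos \<Lambda>1 by blast
lemma th_pos: "0 < th q" unfolding th_def using \<Lambda>pos by simp
lemma c1_pos: "0 < c1 q"
proof -
  have "0 < 2 / (1 - \<Lambda>)" using \<Lambda>1 by simp
  then have "0 < 1 + 2 / (1 - \<Lambda>)" by linarith
  then show ?thesis unfolding c1_def by simp
qed

lemma nnq_meas: "g \<in> borel_measurable M \<Longrightarrow> (\<lambda>y. ennreal (\<bar>g y\<bar> powr q)) \<in> borel_measurable M"
  by measurable

lemma nnq_E: "g \<in> borel_measurable M \<Longrightarrow> nnq q (\<lambda>y. g (E y)) = nnq q g"
  unfolding nnq_def by (rule nn_E) (rule nnq_meas)

lemma nnq_zero: "0 < q \<Longrightarrow> nnq q (\<lambda>y. 0) = 0"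
  unfolding nnq_def by simp

lemma contr_step:
  assumes q: "0 < q" and X: "X \<in> borel_measurable M" and u: "u \<in> borel_measurable M"
    and Y: "Y \<in> borel_measurable M"
    and ae: "AE y in M. \<bar>X y\<bar> \<le> \<bar>u y\<bar> + \<Lambda> * \<bar>Y (E y)\<bar>"
  shows "nnq q X \<le> ennreal (c1 q) * nnq q u + ennreal (th q) * nnq q Y"
proof -
  have YE: "(\<lambda>y. Y (E y)) \<in> borel_measurable M" by (rule measurable_compose[OF E_meas Y])
  have "nnq q X \<le> (\<integral>\<^sup>+y. ennreal (c1 q) * ennreal (\<bar>u y\<bar> powr q) + ennreal (th q) * ennreal (\<bar>Y (E y)\<bar> powr q) \<partial>M)"
    unfolding nnq_def
  proof (rule nn_integral_mono_AE)
    show "AE y in M. ennreal (\<bar>X y\<bar> powr q) \<le> ennreal (c1 q) * ennreal (\<bar>u y\<bar> powr q) + ennreal (th q) * ennreal (\<bar>Y (E y)\<bar> powr q)"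
      using ae
    proof (eventually_elim)
      case (elim y)
      have "\<bar>X y\<bar> powr q \<le> (\<bar>u y\<bar> + \<Lambda> * \<bar>Y (E y)\<bar>) powr q" using elim q by (intro powr_mono2) auto
      also have "\<dots> \<le> c1 q * \<bar>u y\<bar> powr q + th q * \<bar>Y (E y)\<bar> powr q"
        unfolding c1_def th_def using ineq_contr[of "\<bar>u y\<bar>" "\<bar>Y (E y)\<bar>" q \<Lambda>] q \<Lambda>pos \<Lambda>1 by simp
      finally have "ennreal (\<bar>X y\<bar> powr q) \<le> ennreal (c1 q * \<bar>u y\<bar> powr q + th q * \<bar>Y (E y)\<bar> powr q)"
        by (rule ennreal_leI)
      also have "\<dots> = ennreal (c1 q) * ennreal (\<bar>u y\<bar> powr q) + ennreal (th q) * ennreal (\<bar>Y (E y)\<bar> powr q)"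
        using c1_pos th_pos by (simp add: ennreal_plus ennreal_mult less_imp_le)
      finally show ?case .
    qed
  qed
  also have "\<dots> = ennreal (c1 q) * nnq q u + ennreal (th q) * nnq q (\<lambda>y. Y (E y))"
    unfolding nnq_def using nnq_meas[OF u] nnq_meas[OF YE]
    by (simp add: nn_integral_add nn_integral_cmult)
  also have "nnq q (\<lambda>y. Y (E y)) = nnq q Y" by (rule nnq_E[OF Y])
  finally show ?thesis .
qed

lemma uniq:
  assumes q: "0 < q" and w: "w \<in> borel_measurable M" and fin: "nnq q w < \<infinity>"
    and ae: "AE y in M. w y = \<beta> y * w (E y)"
  shows "AE y in M. w y = 0"
proof -
  have "AE y in M. \<bar>w y\<bar> \<le> \<bar>0\<bar> + \<Lambda> * \<bar>w (E y)\<bar>"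
    using ae \<beta>_bd
  proof (eventually_elim)
    case (elim y)
    then have "\<bar>w y\<bar> = \<bar>\<beta> y\<bar> * \<bar>w (E y)\<bar>" by (simp add: abs_mult)
    also have "\<dots> \<le> \<Lambda> * \<bar>w (E y)\<bar>" using elim by (intro mult_right_mono) auto
    finally show ?case by simp
  qed
  from contr_step[OF q w _ w this] have le: "nnq q w \<le> ennreal (th q) * nnq q w"
    using nnq_zero[OF q] by simp
  obtain r where r: "nnq q w = ennreal r" "0 \<le> r" using fin by (cases "nnq q w") auto
  have "ennreal r \<le> ennreal (th q * r)" using le r th_pos by (simp add: ennreal_mult less_imp_le)
  then have "r \<le> th q * r" using th_pos[of q] r
    by (subst (asm) ennreal_le_iff) (auto intro: mult_nonneg_nonneg less_imp_le)
  then have "(1 - th q) * r \<le> 0" by (simp add: algebra_simps)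
  then have "r \<le> 0" using th_lt1[OF q] by (simp add: mult_le_0_iff)
  then have "r = 0" using r by simp
  then have "nnq q w = 0" using r by simp
  then have "AE y in M. ennreal (\<bar>w y\<bar> powr q) = 0"
    unfolding nnq_def using nn_integral_0_iff_AE[OF nnq_meas[OF w]] by simp
  then show ?thesis by eventually_elim simp
qed

lemma apriori:
  assumes q: "0 < q" and h: "h \<in> borel_measurable M" and u: "u \<in> borel_measurable M"
    and fin: "nnq q h < \<infinity>"
    and ae: "AE y in M. h y = u y + \<beta> y * h (E y)"
  shows "nnq q h \<le> ennreal (c1 q / (1 - th q)) * nnq q u"
proof -
  have "AE y in M. \<bar>h y\<bar> \<le> \<bar>u y\<bar> + \<Lambda> * \<bar>h (E y)\<bar>"
    using ae \<beta>_bd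
  proof (eventually_elim)
    case (elim y)
    then have "\<bar>h y\<bar> \<le> \<bar>u y\<bar> + \<bar>\<beta> y\<bar> * \<bar>h (E y)\<bar>" by (simp add: abs_mult[symmetric] abs_triangle_ineq)
    also have "\<dots> \<le> \<bar>u y\<bar> + \<Lambda> * \<bar>h (E y)\<bar>" using elim by (intro add_left_mono mult_right_mono) auto
    finally show ?case .
  qed
  from contr_step[OF q h u h this] have le: "nnq q h \<le> ennreal (c1 q) * nnq q u + ennreal (th q) * nnq q h" .
  show ?thesis
  proof (cases "nnq q u = \<infinity>")
    case True
    have "0 < c1 q / (1 - th q)" using c1_pos th_lt1[OF q] by simp
    then have "ennreal (c1 q / (1 - th q)) \<noteq> 0" using ennreal_eq_0_iff by (metis not_le order_refl)
    then have "ennreal (c1 q / (1 - th q)) * nnq q u = top" using True ennreal_mult_top by simp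
    then show ?thesis by simp
  next
    case False
    obtain r where r: "nnq q h = ennreal r" "0 \<le> r" using fin by (cases "nnq q h") auto
    obtain v where v: "nnq q u = ennreal v" "0 \<le> v" using False by (cases "nnq q u") auto
    have "ennreal r \<le> ennreal (c1 q * v + th q * r)"
      using le r v c1_pos th_pos by (simp add: ennreal_mult ennreal_plus less_imp_le)
    then have "r \<le> c1 q * v + th q * r" using r v c1_pos[of q] th_pos[of q]
      by (subst (asm) ennreal_le_iff) (auto intro!: add_nonneg_nonneg mult_nonneg_nonneg)
    then have "r * (1 - th q) \<le> c1 q * v" by (simp add: algebra_simps)
    then have "r \<le> c1 q / (1 - th q) * v" using th_lt1[OF q] by (simp add: field_simps)
    then have "ennreal r \<le> ennreal (c1 q / (1 - th q) * v)" by (rule ennreal_leI)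
    also have "\<dots> = ennreal (c1 q / (1 - th q)) * ennreal v"
      using v c1_pos[of q] th_lt1[OF q] by (intro ennreal_mult) auto
    finally show ?thesis using r v by simp
  qed
qed


lemma Gfun_rec:
  "(\<Sum>k<Suc K. \<Lambda>^k * \<bar>u ((E^^k) y)\<bar>) = \<bar>u y\<bar> + \<Lambda> * (\<Sum>k<K. \<Lambda>^k * \<bar>u ((E^^k) (E y))\<bar>)"
proof -
  have "(\<Sum>k<Suc K. \<Lambda>^k * \<bar>u ((E^^k) y)\<bar>) = \<bar>u y\<bar> + (\<Sum>k<K. \<Lambda>^Suc k * \<bar>u ((E^^Suc k) y)\<bar>)"
    by (subst sum.lessThan_Suc_shift) simp
  also have "(\<Sum>k<K. \<Lambda>^Suc k * \<bar>u ((E^^Suc k) y)\<bar>) = (\<Sum>k<K. \<Lambda> * (\<Lambda>^k * \<bar>u ((E^^k) (E y))\<bar>))"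
    by (intro sum.cong refl) (simp only: funpow_Suc_right comp_apply power_Suc mult.assoc)
  finally show ?thesis by (simp add: sum_distrib_left)
qed

lemma tfun_rec:
  "(\<Prod>j<Suc k. \<beta> ((E^^j) y)) * u ((E^^Suc k) y) = \<beta> y * ((\<Prod>j<k. \<beta> ((E^^j) (E y))) * u ((E^^k) (E y)))"
proof -
  have "(\<Prod>j<Suc k. \<beta> ((E^^j) y)) = \<beta> y * (\<Prod>j<k. \<beta> ((E^^Suc j) y))"
    by (subst prod.lessThan_Suc_shift) simp
  also have "(\<Prod>j<k. \<beta> ((E^^Suc j) y)) = (\<Prod>j<k. \<beta> ((E^^j) (E y)))"
    by (intro prod.cong refl) (simp only: funpow_Suc_right comp_apply)
  finally show ?thesis by (simp only: funpow_Suc_right comp_apply mult.assoc)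
qed

lemma exist:
  assumes q: "0 < q" and u: "u \<in> borel_measurable M" and fin: "nnq q u < \<infinity>"
  shows "\<exists>h. h \<in> borel_measurable M \<and> nnq q h < \<infinity> \<and> (AE y in M. h y = u y + \<beta> y * h (E y))
     \<and> (AE y in M. summable (\<lambda>k. \<Lambda>^k * \<bar>u ((E^^k) y)\<bar>) \<and> \<bar>h y\<bar> \<le> (\<Sum>k. \<Lambda>^k * \<bar>u ((E^^k) y)\<bar>))"
proof -
  define t where "t k y = (\<Prod>j<k. \<beta> ((E^^j) y)) * u ((E^^k) y)" for k y
  define G where "G K y = (\<Sum>k<K. \<Lambda>^k * \<bar>u ((E^^k) y)\<bar>)" for K y
  define h where "h y = (\<Sum>k. t k y)" for y
  define B where "B = ennreal (c1 q / (1 - th q)) * nnq q u"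
  have Bfin: "B < \<infinity>" unfolding B_def using fin by (simp add: ennreal_mult_less_top)
  have uE: "(\<lambda>y. u ((E^^k) y)) \<in> borel_measurable M" for k
    by (rule measurable_compose[OF Epow_meas u])
  have bE: "(\<lambda>y. \<beta> ((E^^k) y)) \<in> borel_measurable M" for k
    by (rule measurable_compose[OF Epow_meas \<beta>_meas])
  have tm: "t k \<in> borel_measurable M" for k
    unfolding t_def[abs_def] using bE uE by (intro borel_measurable_times borel_measurable_prod) auto
  have Gm: "G K \<in> borel_measurable M" for K
    unfolding G_def[abs_def] using uE by (intro borel_measurable_sum borel_measurable_times) auto
  have hm: "h \<in> borel_measurable M"
  proof -
    have "h = (\<lambda>y. lim (\<lambda>n. \<Sum>k<n. t k y))" unfolding h_def[abs_def] by (simp add: suminf_eq_lim)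
    also have "\<dots> \<in> borel_measurable M" using tm by (intro borel_measurable_lim_metric borel_measurable_sum) auto
    finally show ?thesis .
  qed
  have G0: "G K y \<ge> 0" for K y unfolding G_def using \<Lambda>pos by (intro sum_nonneg) auto
  have Gmono: "G K y \<le> G K' y" if "K \<le> K'" for K K' y
    unfolding G_def using that \<Lambda>pos by (intro sum_mono2) auto
  have Gbd: "nnq q (G K) \<le> B" for K
  proof (induction K)
    case 0 then show ?case unfolding G_def using nnq_zero[OF q] by simp
  next
    case (Suc K)
    have "AE y in M. \<bar>G (Suc K) y\<bar> \<le> \<bar>u y\<bar> + \<Lambda> * \<bar>G K (E y)\<bar>"
      unfolding G_def using Gfun_rec[where K=K and u=u] \<Lambda>pos by (intro AE_I2) (simp add: sum_nonneg)
    from contr_step[OF q Gm u Gm this]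
    have "nnq q (G (Suc K)) \<le> ennreal (c1 q) * nnq q u + ennreal (th q) * nnq q (G K)" .
    also have "\<dots> \<le> ennreal (c1 q) * nnq q u + ennreal (th q) * B"
      using Suc by (intro add_left_mono mult_left_mono) auto
    also have "\<dots> = B"
    proof -
      obtain v where v: "nnq q u = ennreal v" "0 \<le> v" using fin by (cases "nnq q u") auto
      have t1: "th q < 1" using th_lt1[OF q] .
      have "c1 q * v + th q * (c1 q / (1 - th q) * v) = c1 q / (1 - th q) * v"
        using t1 by (simp add: field_simps)
      moreover have "ennreal (c1 q) * nnq q u + ennreal (th q) * B = ennreal (c1 q * v + th q * (c1 q / (1 - th q) * v))"
        unfolding B_def v using c1_pos[of q] th_pos[of q] t1 v
        by (simp add: ennreal_mult[symmetric] ennreal_plus[symmetric] del: ennreal_plus)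
      moreover have "B = ennreal (c1 q / (1 - th q) * v)"
        unfolding B_def v using c1_pos[of q] t1 v by (subst ennreal_mult) auto
      ultimately show ?thesis by simp
    qed
    finally show ?case .
  qed
  define F where "F K y = ennreal (G K y powr q)" for K y
  have Fm: "F K \<in> borel_measurable M" for K unfolding F_def[abs_def] using Gm by measurable
  have Finc: "incseq F"
    unfolding incseq_def le_fun_def F_def using Gmono G0 q by (auto intro!: ennreal_leI powr_mono2)
  have SUPint: "(\<integral>\<^sup>+y. (SUP K. F K y) \<partial>M) \<le> B"
    using nn_integral_monotone_convergence_SUP[OF Finc Fm] Gbd unfolding nnq_def F_def
    using G0 by (simp add: SUP_least)
  have SUPm: "(\<lambda>y. SUP K. F K y) \<in> borel_measurable M" using Fm by (intro borel_measurable_SUP) auto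
  have AEfin: "AE y in M. (SUP K. F K y) \<noteq> \<infinity>"
    using SUPint Bfin by (intro nn_integral_PInf_AE[OF SUPm]) auto
  have AEb: "AE y in M. \<forall>j. \<bar>\<beta> ((E^^j) y)\<bar> \<le> \<Lambda>"
    unfolding AE_all_countable using AE_Epow[OF \<beta>_bd] by blast
  have good: "summable (\<lambda>k. \<Lambda>^k * \<bar>u ((E^^k) y)\<bar>) \<and> \<bar>h y\<bar> \<le> (\<Sum>k. \<Lambda>^k * \<bar>u ((E^^k) y)\<bar>)
     \<and> h y = u y + \<beta> y * h (E y) \<and> ennreal (\<bar>h y\<bar> powr q) \<le> (SUP K. F K y)"
    if fy: "(SUP K. F K y) \<noteq> \<infinity>" and hby: "\<forall>j. \<bar>\<beta> ((E^^j) y)\<bar> \<le> \<Lambda>" for y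
  proof -
    define S where "S = enn2real (SUP K. F K y)"
    have S0: "0 \<le> S" unfolding S_def by simp
    have SUPeq: "(SUP K. F K y) = ennreal S" unfolding S_def
      by (rule ennreal_enn2real[symmetric]) (use fy in \<open>simp only: less_top[symmetric] infinity_ennreal_def not_False_eq_True\<close>)
    have GS: "G K y \<le> S powr (1/q)" for K
    proof -
      have "F K y \<le> ennreal S" using SUPeq by (metis SUP_upper UNIV_I)
      then have "G K y powr q \<le> S" unfolding F_def using S0 by (simp add: ennreal_le_iff)
      then have "(G K y powr q) powr (1/q) \<le> S powr (1/q)" using q by (intro powr_mono2) auto
      then show ?thesis using G0[of K y] q by (simp add: powr_powr)
    qed
    let ?g = "\<lambda>k. \<Lambda>^k * \<bar>u ((E^^k) y)\<bar>"
    have sg: "summable ?g"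
    proof (rule bounded_imp_summable)
      show "0 \<le> ?g n" for n using \<Lambda>pos by simp
      show "(\<Sum>k\<le>n. ?g k) \<le> S powr (1/q)" for n
        using GS[of "Suc n"] unfolding G_def by (simp add: lessThan_Suc_atMost)
    qed
    have tb: "\<bar>t k y\<bar> \<le> ?g k" for k
    proof -
      have "\<bar>\<Prod>j<k. \<beta> ((E^^j) y)\<bar> = (\<Prod>j<k. \<bar>\<beta> ((E^^j) y)\<bar>)" by (rule abs_prod)
      also have "\<dots> \<le> (\<Prod>j<k. \<Lambda>)" using hby by (intro prod_mono) auto
      also have "\<dots> = \<Lambda>^k" by simp
      finally show ?thesis unfolding t_def abs_mult by (intro mult_right_mono) auto
    qed
    have sta: "summable (\<lambda>k. \<bar>t k y\<bar>)"
      by (rule summable_comparison_test'[OF sg, of 0]) (use tb in simp)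
    have st: "summable (\<lambda>k. t k y)"
      by (rule summable_comparison_test'[OF sg, of 0]) (use tb in simp)
    have hb: "\<bar>h y\<bar> \<le> suminf ?g"
    proof -
      have "\<bar>h y\<bar> \<le> (\<Sum>k. \<bar>t k y\<bar>)" unfolding h_def by (rule summable_rabs[OF sta])
      also have "\<dots> \<le> suminf ?g" using sta sg tb by (intro suminf_le) auto
      finally show ?thesis .
    qed
    have fp: "h y = u y + \<beta> y * h (E y)"
    proof -
      have "h y = t 0 y + (\<Sum>k. t (Suc k) y)" unfolding h_def using suminf_split_head[OF st] by simp
      also have "t 0 y = u y" unfolding t_def by simp
      also have "(\<lambda>k. t (Suc k) y) = (\<lambda>k. \<beta> y * t k (E y))"
        unfolding t_def by (rule ext) (rule tfun_rec)
      also have "(\<Sum>k. \<beta> y * t k (E y)) = \<beta> y * h (E y)"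
      proof (cases "\<beta> y = 0")
        case True then show ?thesis by simp
      next
        case False
        have "summable (\<lambda>k. t (Suc k) y)" using st by (subst summable_Suc_iff)
        also have "(\<lambda>k. t (Suc k) y) = (\<lambda>k. \<beta> y * t k (E y))"
          unfolding t_def by (rule ext) (rule tfun_rec)
        finally have "summable (\<lambda>k. t k (E y))" using False by (simp add: summable_cmult_iff)
        then show ?thesis unfolding h_def by (rule suminf_mult)
      qed
      finally show ?thesis .
    qed
    have "suminf ?g \<le> S powr (1/q)"
      using sg GS unfolding G_def by (intro suminf_le_const) auto
    then have "\<bar>h y\<bar> \<le> S powr (1/q)" using hb by linarith
    then have "\<bar>h y\<bar> powr q \<le> (S powr (1/q)) powr q" using q by (intro powr_mono2) auto
    also have "\<dots> = S" using q S0 by (simp add: powr_powr)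
    finally have "ennreal (\<bar>h y\<bar> powr q) \<le> (SUP K. F K y)" unfolding SUPeq by (rule ennreal_leI)
    then show ?thesis using sg hb fp by simp
  qed
  have AEgood: "AE y in M. summable (\<lambda>k. \<Lambda>^k * \<bar>u ((E^^k) y)\<bar>) \<and> \<bar>h y\<bar> \<le> (\<Sum>k. \<Lambda>^k * \<bar>u ((E^^k) y)\<bar>)
     \<and> h y = u y + \<beta> y * h (E y) \<and> ennreal (\<bar>h y\<bar> powr q) \<le> (SUP K. F K y)"
    using AEfin AEb by eventually_elim (rule good)
  have "nnq q h \<le> (\<integral>\<^sup>+y. (SUP K. F K y) \<partial>M)"
    unfolding nnq_def using AEgood by (intro nn_integral_mono_AE) auto
  also have "\<dots> \<le> B" by (rule SUPint)
  finally have "nnq q h < \<infinity>" using Bfin by auto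
  moreover have "AE y in M. h y = u y + \<beta> y * h (E y)" using AEgood by eventually_elim auto
  moreover have "AE y in M. summable (\<lambda>k. \<Lambda>^k * \<bar>u ((E^^k) y)\<bar>) \<and> \<bar>h y\<bar> \<le> (\<Sum>k. \<Lambda>^k * \<bar>u ((E^^k) y)\<bar>)"
    using AEgood by eventually_elim auto
  ultimately show ?thesis using hm by blast
qed


lemma emeasure_M: "emeasure M (space M) = ennreal (xs N - xs 0)"
  using a_lt_b by (simp add: emeasure_restrict_space)

lemma nnq_bound2:
  assumes q: "0 < q" and X: "X \<in> borel_measurable M" and g1: "g1 \<in> borel_measurable M"
    and g2: "g2 \<in> borel_measurable M" and a1: "0 \<le> a1" and a2: "0 \<le> a2"
    and ae: "AE y in M. \<bar>X y\<bar> \<le> a1 * \<bar>g1 y\<bar> + a2 * \<bar>g2 y\<bar>"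
  shows "nnq q X \<le> ennreal (2 powr q * a1 powr q) * nnq q g1 + ennreal (2 powr q * a2 powr q) * nnq q g2"
proof -
  have "nnq q X \<le> (\<integral>\<^sup>+y. ennreal (2 powr q * a1 powr q) * ennreal (\<bar>g1 y\<bar> powr q) + ennreal (2 powr q * a2 powr q) * ennreal (\<bar>g2 y\<bar> powr q) \<partial>M)"
    unfolding nnq_def
  proof (rule nn_integral_mono_AE)
    show "AE y in M. ennreal (\<bar>X y\<bar> powr q) \<le> ennreal (2 powr q * a1 powr q) * ennreal (\<bar>g1 y\<bar> powr q) + ennreal (2 powr q * a2 powr q) * ennreal (\<bar>g2 y\<bar> powr q)"
      using ae
    proof (eventually_elim)
      case (elim y)
      have "\<bar>X y\<bar> powr q \<le> (a1 * \<bar>g1 y\<bar> + a2 * \<bar>g2 y\<bar>) powr q" using elim q by (intro powr_mono2) auto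
      also have "\<dots> \<le> 2 powr q * ((a1 * \<bar>g1 y\<bar>) powr q + (a2 * \<bar>g2 y\<bar>) powr q)"
        using a1 a2 q by (intro ineq_two) auto
      also have "\<dots> = (2 powr q * a1 powr q) * \<bar>g1 y\<bar> powr q + (2 powr q * a2 powr q) * \<bar>g2 y\<bar> powr q"
        using a1 a2 by (simp add: powr_mult algebra_simps)
      finally have "ennreal (\<bar>X y\<bar> powr q) \<le> ennreal ((2 powr q * a1 powr q) * \<bar>g1 y\<bar> powr q + (2 powr q * a2 powr q) * \<bar>g2 y\<bar> powr q)"
        by (rule ennreal_leI)
      also have "\<dots> = ennreal (2 powr q * a1 powr q) * ennreal (\<bar>g1 y\<bar> powr q) + ennreal (2 powr q * a2 powr q) * ennreal (\<bar>g2 y\<bar> powr q)"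
        by (simp add: ennreal_plus ennreal_mult)
      finally show ?case .
    qed
  qed
  also have "\<dots> = ennreal (2 powr q * a1 powr q) * nnq q g1 + ennreal (2 powr q * a2 powr q) * nnq q g2"
    unfolding nnq_def using nnq_meas[OF g1] nnq_meas[OF g2]
    by (simp add: nn_integral_add nn_integral_cmult)
  finally show ?thesis .
qed

lemma Lp_fin_iff:
  assumes q: "0 < q"
  shows "g \<in> Lp_space (ennreal q) I \<longleftrightarrow> g \<in> borel_measurable M \<and> nnq q g < \<infinity>"
proof -
  have "enn2real (ennreal q) = q" using q by simp
  then have "g \<in> Lp_space (ennreal q) I \<longleftrightarrow> g \<in> borel_measurable M \<and> integrable M (\<lambda>x. \<bar>g x\<bar> powr q)"
    unfolding Lp_space_def by simp
  also have "\<dots> \<longleftrightarrow> g \<in> borel_measurable M \<and> nnq q g < \<infinity>"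
  proof safe
    assume "integrable M (\<lambda>x. \<bar>g x\<bar> powr q)"
    then show "nnq q g < \<infinity>" unfolding integrable_iff_bounded nnq_def by simp
  next
    assume g: "g \<in> borel_measurable M" and "nnq q g < \<infinity>"
    then show "integrable M (\<lambda>x. \<bar>g x\<bar> powr q)"
      unfolding integrable_iff_bounded nnq_def by simp
  qed
  finally show ?thesis .
qed

lemma int_nnq:
  assumes q: "0 < q" and g: "g \<in> borel_measurable M"
  shows "(\<integral>x. \<bar>g x\<bar> powr q \<partial>M) = enn2real (nnq q g)"
  unfolding nnq_def using g by (intro integral_eq_nn_integral) auto

lemma Lp_inf_iff: "g \<in> Lp_space \<infinity> I \<longleftrightarrow> g \<in> borel_measurable M \<and> (\<exists>B. AE x in M. \<bar>g x\<bar> \<le> B)"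
  unfolding Lp_space_def by simp

lemma Lp_inf_nnq1:
  assumes "g \<in> Lp_space \<infinity> I" shows "nnq 1 g < \<infinity>"
proof -
  obtain B where B: "AE x in M. \<bar>g x\<bar> \<le> B" using assms Lp_inf_iff by auto
  have "nnq 1 g \<le> (\<integral>\<^sup>+x. ennreal B \<partial>M)"
    unfolding nnq_def using B by (intro nn_integral_mono_AE) (auto elim!: eventually_mono intro!: ennreal_leI)
  also have "\<dots> < \<infinity>" using emeasure_M by (simp add: ennreal_mult_less_top)
  finally show ?thesis .
qed

lemma Lp_comb:
  assumes p: "0 < p" and g1: "g1 \<in> Lp_space p I" and g2: "g2 \<in> Lp_space p I"
  shows "(\<lambda>t. c * g1 t + d * g2 t) \<in> Lp_space p I"
proof (cases "p = \<infinity>")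
  case True
  obtain B1 where B1: "AE x in M. \<bar>g1 x\<bar> \<le> B1" and m1: "g1 \<in> borel_measurable M"
    using g1 True Lp_inf_iff by auto
  obtain B2 where B2: "AE x in M. \<bar>g2 x\<bar> \<le> B2" and m2: "g2 \<in> borel_measurable M"
    using g2 True Lp_inf_iff by auto
  have "AE x in M. \<bar>c * g1 x + d * g2 x\<bar> \<le> \<bar>c\<bar> * B1 + \<bar>d\<bar> * B2"
    using B1 B2
  proof eventually_elim
    case (elim x)
    have "\<bar>c * g1 x + d * g2 x\<bar> \<le> \<bar>c\<bar> * \<bar>g1 x\<bar> + \<bar>d\<bar> * \<bar>g2 x\<bar>"
      by (metis abs_mult abs_triangle_ineq)
    also have "\<dots> \<le> \<bar>c\<bar> * B1 + \<bar>d\<bar> * B2" using elim by (intro add_mono mult_left_mono) auto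
    finally show ?case .
  qed
  then show ?thesis using True m1 m2 Lp_inf_iff by auto
next
  case False
  define q where "q = enn2real p"
  have pq: "p = ennreal q" and q: "0 < q" using False p unfolding q_def
    by (cases p; auto)+
  have m1: "g1 \<in> borel_measurable M" and f1: "nnq q g1 < \<infinity>" using g1 Lp_fin_iff[OF q] pq by auto
  have m2: "g2 \<in> borel_measurable M" and f2: "nnq q g2 < \<infinity>" using g2 Lp_fin_iff[OF q] pq by auto
  have m: "(\<lambda>t. c * g1 t + d * g2 t) \<in> borel_measurable M" using m1 m2 by measurable
  have "nnq q (\<lambda>t. c * g1 t + d * g2 t) \<le> ennreal (2 powr q * \<bar>c\<bar> powr q) * nnq q g1 + ennreal (2 powr q * \<bar>d\<bar> powr q) * nnq q g2"
    using q m m1 m2 by (intro nnq_bound2) (auto intro!: AE_I2 simp: abs_mult[symmetric] abs_triangle_ineq)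
  also have "\<dots> < \<infinity>" using f1 f2 by (simp add: ennreal_mult_less_top)
  finally show ?thesis using m Lp_fin_iff[OF q] pq by simp
qed


lemma fc_some:
  assumes "\<exists>h. h \<in> Lp_space p I \<and> (AE y in M. h y = fcT N xs \<alpha> f b h y)"
  shows "frac_conv p N xs \<alpha> f b \<in> Lp_space p I \<and>
    (AE y in M. frac_conv p N xs \<alpha> f b y = fcT N xs \<alpha> f b (frac_conv p N xs \<alpha> f b) y)"
  unfolding frac_conv_def by (rule someI_ex[OF assms])

lemma u_meas:
  assumes "f \<in> borel_measurable M" "b \<in> borel_measurable M"
  shows "(\<lambda>y. f y - \<beta> y * b (E y)) \<in> borel_measurable M"
  using assms \<beta>_meas measurable_compose[OF E_meas assms(2)] by measurable

lemma fix_u: "fcT N xs \<alpha> f b h y = (f y - \<beta> y * b (E y)) + \<beta> y * h (E y)"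
  unfolding fcT_eq by (simp add: algebra_simps)

lemma u_bound:
  assumes q: "0 < q" and f: "f \<in> borel_measurable M" and b: "b \<in> borel_measurable M"
  shows "nnq q (\<lambda>y. f y - \<beta> y * b (E y)) \<le> ennreal (2 powr q) * (nnq q f + nnq q b)"
proof -
  have bE: "(\<lambda>y. b (E y)) \<in> borel_measurable M" by (rule measurable_compose[OF E_meas b])
  have "AE y in M. \<bar>f y - \<beta> y * b (E y)\<bar> \<le> 1 * \<bar>f y\<bar> + 1 * \<bar>b (E y)\<bar>"
    using \<beta>_bd
  proof eventually_elim
    case (elim y)
    have "\<bar>f y - \<beta> y * b (E y)\<bar> \<le> \<bar>f y\<bar> + \<bar>\<beta> y\<bar> * \<bar>b (E y)\<bar>"
      by (metis abs_mult abs_triangle_ineq4)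
    also have "\<dots> \<le> \<bar>f y\<bar> + 1 * \<bar>b (E y)\<bar>" using elim \<Lambda>1 by (intro add_left_mono mult_right_mono) auto
    finally show ?case by simp
  qed
  from nnq_bound2[OF q u_meas[OF f b] f bE _ _ this]
  have "nnq q (\<lambda>y. f y - \<beta> y * b (E y)) \<le> ennreal (2 powr q) * nnq q f + ennreal (2 powr q) * nnq q (\<lambda>y. b (E y))"
    by simp
  also have "nnq q (\<lambda>y. b (E y)) = nnq q b" by (rule nnq_E[OF b])
  finally show ?thesis by (simp add: distrib_left)
qed

definition Kq :: "real \<Rightarrow> real" where "Kq q = c1 q / (1 - th q) * 2 powr q"

lemma Kq_pos: "0 < q \<Longrightarrow> 0 < Kq q"
  unfolding Kq_def using c1_pos[of q] th_lt1[of q] by simp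

lemma fin_fix:
  assumes q: "0 < q" and f: "f \<in> Lp_space (ennreal q) I" and b: "b \<in> Lp_space (ennreal q) I"
  shows "frac_conv (ennreal q) N xs \<alpha> f b \<in> Lp_space (ennreal q) I \<and>
    (AE y in M. frac_conv (ennreal q) N xs \<alpha> f b y = fcT N xs \<alpha> f b (frac_conv (ennreal q) N xs \<alpha> f b) y)"
proof (rule fc_some)
  have fm: "f \<in> borel_measurable M" "nnq q f < \<infinity>" using f Lp_fin_iff[OF q] by auto
  have bm: "b \<in> borel_measurable M" "nnq q b < \<infinity>" using b Lp_fin_iff[OF q] by auto
  have "nnq q (\<lambda>y. f y - \<beta> y * b (E y)) < \<infinity>"
    using u_bound[OF q fm(1) bm(1)] fm(2) bm(2)
    by (auto simp: ennreal_mult_less_top intro: le_less_trans)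
  from exist[OF q u_meas[OF fm(1) bm(1)] this] obtain h where
    h: "h \<in> borel_measurable M" "nnq q h < \<infinity>" "AE y in M. h y = (f y - \<beta> y * b (E y)) + \<beta> y * h (E y)"
    by blast
  show "\<exists>h. h \<in> Lp_space (ennreal q) I \<and> (AE y in M. h y = fcT N xs \<alpha> f b h y)"
    using h Lp_fin_iff[OF q] by (intro exI[of _ h]) (simp add: fix_u)
qed

lemma fin_bound:
  assumes q: "0 < q" and f: "f \<in> Lp_space (ennreal q) I" and b: "b \<in> Lp_space (ennreal q) I"
    and h: "h \<in> Lp_space (ennreal q) I" and fx: "AE y in M. h y = fcT N xs \<alpha> f b h y"
  shows "enn2real (nnq q h) \<le> Kq q * (enn2real (nnq q f) + enn2real (nnq q b))"
proof -
  have fm: "f \<in> borel_measurable M" "nnq q f < \<infinity>" using f Lp_fin_iff[OF q] by auto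
  have bm: "b \<in> borel_measurable M" "nnq q b < \<infinity>" using b Lp_fin_iff[OF q] by auto
  have hm: "h \<in> borel_measurable M" "nnq q h < \<infinity>" using h Lp_fin_iff[OF q] by auto
  have "AE y in M. h y = (f y - \<beta> y * b (E y)) + \<beta> y * h (E y)" using fx by (simp add: fix_u)
  from apriori[OF q hm(1) u_meas[OF fm(1) bm(1)] hm(2) this]
  have "nnq q h \<le> ennreal (c1 q / (1 - th q)) * nnq q (\<lambda>y. f y - \<beta> y * b (E y))" .
  also have "\<dots> \<le> ennreal (c1 q / (1 - th q)) * (ennreal (2 powr q) * (nnq q f + nnq q b))"
    by (intro mult_left_mono u_bound[OF q fm(1) bm(1)]) auto
  also have "\<dots> = ennreal (Kq q) * (nnq q f + nnq q b)"
  proof -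
    have "ennreal (c1 q / (1 - th q)) * ennreal (2 powr q) = ennreal (Kq q)"
      unfolding Kq_def using c1_pos[of q] th_lt1[OF q] by (subst ennreal_mult[symmetric]) auto
    then show ?thesis by (simp add: mult.assoc[symmetric])
  qed
  finally have le: "nnq q h \<le> ennreal (Kq q) * (nnq q f + nnq q b)" .
  have "enn2real (nnq q h) \<le> enn2real (ennreal (Kq q) * (nnq q f + nnq q b))"
    using le fm(2) bm(2) by (intro enn2real_mono) (auto simp: ennreal_mult_less_top)
  also have "\<dots> = Kq q * (enn2real (nnq q f) + enn2real (nnq q b))"
    using fm(2) bm(2) Kq_pos[OF q] by (simp add: enn2real_mult enn2real_plus)
  finally show ?thesis .
qed

lemma lin:
  assumes q: "0 < q" and p: "0 < p"
    and Lpq: "\<And>g. g \<in> Lp_space p I \<Longrightarrow> nnq q g < \<infinity>"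
    and Lpm: "\<And>g. g \<in> Lp_space p I \<Longrightarrow> g \<in> borel_measurable M"
    and fx: "\<And>f b. f \<in> Lp_space p I \<Longrightarrow> b \<in> Lp_space p I \<Longrightarrow> frac_conv p N xs \<alpha> f b \<in> Lp_space p I \<and>
         (AE y in M. frac_conv p N xs \<alpha> f b y = fcT N xs \<alpha> f b (frac_conv p N xs \<alpha> f b) y)"
    and f: "f \<in> Lp_space p I" and b: "b \<in> Lp_space p I"
    and f': "f' \<in> Lp_space p I" and b': "b' \<in> Lp_space p I"
  shows "AE y in M. frac_conv p N xs \<alpha> (\<lambda>t. c * f t + d * f' t) (\<lambda>t. c * b t + d * b' t) y
              = c * frac_conv p N xs \<alpha> f b y + d * frac_conv p N xs \<alpha> f' b' y"
proof -
  define h1 where "h1 = frac_conv p N xs \<alpha> f b"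
  define h2 where "h2 = frac_conv p N xs \<alpha> f' b'"
  define F where "F = (\<lambda>t. c * f t + d * f' t)"
  define Bc where "Bc = (\<lambda>t. c * b t + d * b' t)"
  define h3 where "h3 = frac_conv p N xs \<alpha> F Bc"
  have F: "F \<in> Lp_space p I" unfolding F_def by (rule Lp_comb[OF p f f'])
  have Bc: "Bc \<in> Lp_space p I" unfolding Bc_def by (rule Lp_comb[OF p b b'])
  have h1: "h1 \<in> Lp_space p I" "AE y in M. h1 y = fcT N xs \<alpha> f b h1 y" using fx[OF f b] unfolding h1_def by auto
  have h2: "h2 \<in> Lp_space p I" "AE y in M. h2 y = fcT N xs \<alpha> f' b' h2 y" using fx[OF f' b'] unfolding h2_def by auto
  have h3: "h3 \<in> Lp_space p I" "AE y in M. h3 y = fcT N xs \<alpha> F Bc h3 y" using fx[OF F Bc] unfolding h3_def by auto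
  define H where "H = (\<lambda>t. c * h1 t + d * h2 t)"
  have H: "H \<in> Lp_space p I" unfolding H_def by (rule Lp_comb[OF p h1(1) h2(1)])
  define w where "w = (\<lambda>t. 1 * h3 t + (-1) * H t)"
  have w: "w \<in> Lp_space p I" unfolding w_def by (rule Lp_comb[OF p h3(1) H])
  have "AE y in M. w y = \<beta> y * w (E y)"
    using h1(2) h2(2) h3(2)
  proof eventually_elim
    case (elim y)
    have e1: "h1 y = f y + \<beta> y * (h1 (E y) - b (E y))" using elim(1) fcT_eq by simp
    have e2: "h2 y = f' y + \<beta> y * (h2 (E y) - b' (E y))" using elim(2) fcT_eq by simp
    have e3: "h3 y = F y + \<beta> y * (h3 (E y) - Bc (E y))" using elim(3) fcT_eq by simp
    have "w y = (F y + \<beta> y * (h3 (E y) - Bc (E y))) - (c * (f y + \<beta> y * (h1 (E y) - b (E y))) + d * (f' y + \<beta> y * (h2 (E y) - b' (E y))))"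
      unfolding w_def H_def using e1 e2 e3 by simp
    also have "\<dots> = \<beta> y * w (E y)" unfolding w_def H_def F_def Bc_def by (simp add: algebra_simps)
    finally show ?case .
  qed
  from uniq[OF q Lpm[OF w] Lpq[OF w] this]
  have "AE y in M. w y = 0" .
  then show ?thesis
    unfolding h1_def[symmetric] h2_def[symmetric] F_def[symmetric] Bc_def[symmetric] h3_def[symmetric]
    by eventually_elim (simp add: w_def H_def)
qed


lemma ess:
  assumes g: "g \<in> Lp_space \<infinity> I"
  shows "0 \<le> Lp_size \<infinity> I g \<and> (AE y in M. \<bar>g y\<bar> \<le> Lp_size \<infinity> I g) \<and>
    (\<forall>c. (AE y in M. \<bar>g y\<bar> \<le> c) \<longrightarrow> Lp_size \<infinity> I g \<le> c)"
proof -
  define e where "e = esssup M (\<lambda>x. ereal \<bar>g x\<bar>)"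
  have sz: "Lp_size \<infinity> I g = real_of_ereal e" unfolding Lp_size_def e_def by simp
  obtain B where B: "AE x in M. \<bar>g x\<bar> \<le> B" and gm: "g \<in> borel_measurable M" using g Lp_inf_iff by auto
  have gem: "(\<lambda>x. ereal \<bar>g x\<bar>) \<in> borel_measurable M" using gm by measurable
  have eB: "e \<le> ereal B" unfolding e_def using gem B by (intro esssup_I) (auto elim!: eventually_mono)
  have "esssup M (\<lambda>x. ereal 0) = ereal 0" using emeasure_M a_lt_b by (intro esssup_const) simp
  moreover have "esssup M (\<lambda>x. ereal 0) \<le> e" unfolding e_def by (intro esssup_mono) auto
  ultimately have e0: "0 \<le> e" by (simp add: zero_ereal_def)
  define s where "s = real_of_ereal e"
  have es: "e = ereal s" unfolding s_def using e0 eB by (cases e) auto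
  have s0: "0 \<le> s" using e0 es by simp
  have "AE x in M. ereal \<bar>g x\<bar> \<le> e" unfolding e_def by (rule esssup_AE)
  then have ae: "AE x in M. \<bar>g x\<bar> \<le> s" unfolding es by simp
  have "s \<le> c" if "AE y in M. \<bar>g y\<bar> \<le> c" for c
  proof -
    have "e \<le> ereal c" unfolding e_def using gem that by (intro esssup_I) (auto elim!: eventually_mono)
    then show ?thesis using es by simp
  qed
  then show ?thesis using sz s_def s0 ae by auto
qed

lemma inf_fix:
  assumes f: "f \<in> Lp_space \<infinity> I" and b: "b \<in> Lp_space \<infinity> I"
  shows "frac_conv \<infinity> N xs \<alpha> f b \<in> Lp_space \<infinity> I \<and>
    (AE y in M. frac_conv \<infinity> N xs \<alpha> f b y = fcT N xs \<alpha> f b (frac_conv \<infinity> N xs \<alpha> f b) y)"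
proof (rule fc_some)
  obtain Bf where Bf: "AE x in M. \<bar>f x\<bar> \<le> Bf" and fm: "f \<in> borel_measurable M" using f Lp_inf_iff by auto
  obtain Bb where Bb: "AE x in M. \<bar>b x\<bar> \<le> Bb" and bm: "b \<in> borel_measurable M" using b Lp_inf_iff by auto
  define u where "u = (\<lambda>y. f y - \<beta> y * b (E y))"
  have um: "u \<in> borel_measurable M" unfolding u_def by (rule u_meas[OF fm bm])
  have ub: "AE y in M. \<bar>u y\<bar> \<le> Bf + Bb"
    using Bf AE_E[OF Bb] \<beta>_bd
  proof eventually_elim
    case (elim y)
    have "\<bar>u y\<bar> \<le> \<bar>f y\<bar> + \<bar>\<beta> y\<bar> * \<bar>b (E y)\<bar>" unfolding u_def
      by (metis abs_mult abs_triangle_ineq4)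
    also have "\<dots> \<le> Bf + 1 * Bb" using elim \<Lambda>1 by (intro add_mono mult_mono) auto
    finally show ?case by simp
  qed
  then have uL: "u \<in> Lp_space \<infinity> I" using um Lp_inf_iff by auto
  from exist[OF _ um Lp_inf_nnq1[OF uL]] obtain h where
    h: "h \<in> borel_measurable M" "AE y in M. h y = u y + \<beta> y * h (E y)"
       "AE y in M. summable (\<lambda>k. \<Lambda>^k * \<bar>u ((E^^k) y)\<bar>) \<and> \<bar>h y\<bar> \<le> (\<Sum>k. \<Lambda>^k * \<bar>u ((E^^k) y)\<bar>)"
    by auto
  have ubk: "AE y in M. \<forall>k. \<bar>u ((E^^k) y)\<bar> \<le> Bf + Bb"
    unfolding AE_all_countable using AE_Epow[OF ub] by blast
  have "AE y in M. \<bar>h y\<bar> \<le> (\<Sum>k. \<Lambda>^k * (Bf + Bb))"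
    using h(3) ubk
  proof eventually_elim
    case (elim y)
    have sg: "summable (\<lambda>k. \<Lambda>^k * (Bf + Bb))"
      using \<Lambda>pos \<Lambda>1 by (intro summable_mult2 summable_geometric) auto
    have "(\<Sum>k. \<Lambda>^k * \<bar>u ((E^^k) y)\<bar>) \<le> (\<Sum>k. \<Lambda>^k * (Bf + Bb))"
      using elim sg \<Lambda>pos by (intro suminf_le mult_left_mono) auto
    then show ?case using elim by linarith
  qed
  then have "h \<in> Lp_space \<infinity> I" using h(1) Lp_inf_iff by auto
  then show "\<exists>h. h \<in> Lp_space \<infinity> I \<and> (AE y in M. h y = fcT N xs \<alpha> f b h y)"
    using h(2) unfolding u_def by (intro exI[of _ h]) (simp add: fix_u)
qed

lemma inf_bound:
  assumes f: "f \<in> Lp_space \<infinity> I" and b: "b \<in> Lp_space \<infinity> I"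
    and h: "h \<in> Lp_space \<infinity> I" and fx: "AE y in M. h y = fcT N xs \<alpha> f b h y"
  shows "Lp_size \<infinity> I h \<le> 1 / (1 - \<Lambda>) * (Lp_size \<infinity> I f + Lp_size \<infinity> I b)"
proof -
  define sh where "sh = Lp_size \<infinity> I h"
  define sf where "sf = Lp_size \<infinity> I f"
  define sb where "sb = Lp_size \<infinity> I b"
  note eh = ess[OF h, folded sh_def] and ef = ess[OF f, folded sf_def] and eb = ess[OF b, folded sb_def]
  have "AE y in M. \<bar>h y\<bar> \<le> sf + sb + \<Lambda> * sh"
    using fx \<beta>_bd conjunct1[OF conjunct2[OF ef]] AE_E[OF conjunct1[OF conjunct2[OF eb]]]
      AE_E[OF conjunct1[OF conjunct2[OF eh]]]
  proof eventually_elim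
    case (elim y)
    have "\<bar>h y\<bar> \<le> \<bar>f y\<bar> + \<bar>\<beta> y * (h (E y) - b (E y))\<bar>"
      unfolding elim(1) fcT_eq by (rule abs_triangle_ineq)
    also have "\<dots> = \<bar>f y\<bar> + \<bar>\<beta> y\<bar> * \<bar>h (E y) - b (E y)\<bar>" by (simp add: abs_mult)
    also have "\<dots> \<le> \<bar>f y\<bar> + \<bar>\<beta> y\<bar> * (\<bar>h (E y)\<bar> + \<bar>b (E y)\<bar>)"
      by (intro add_left_mono mult_left_mono abs_triangle_ineq4) simp
    also have "\<dots> \<le> sf + \<Lambda> * (sh + sb)" using elim \<Lambda>pos by (intro add_mono mult_mono) auto
    also have "\<dots> \<le> sf + sb + \<Lambda> * sh" using \<Lambda>1 eb
      by (simp add: algebra_simps mult_left_le_one_le \<Lambda>pos less_imp_le)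
    finally show ?case .
  qed
  then have "sh \<le> sf + sb + \<Lambda> * sh" using eh by blast
  then have "sh * (1 - \<Lambda>) \<le> sf + sb" by (simp add: algebra_simps)
  then have "sh \<le> (sf + sb) / (1 - \<Lambda>)" using \<Lambda>1 by (simp add: field_simps)
  then show ?thesis unfolding sh_def sf_def sb_def by simp
qed


lemma size_fin:
  assumes q: "0 < q" and g: "g \<in> Lp_space (ennreal q) I"
  shows "Lp_size (ennreal q) I g = (if 1 \<le> q then (enn2real (nnq q g)) powr (1/q) else enn2real (nnq q g))"
proof -
  have gm: "g \<in> borel_measurable M" using g Lp_fin_iff[OF q] by auto
  have e: "enn2real (ennreal q) = q" using q by simp
  have o: "(1 \<le> ennreal q) = (1 \<le> q)"
    by (subst ennreal_1[symmetric], subst ennreal_le_iff) (use q in auto)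
  show ?thesis unfolding Lp_size_def e o using int_nnq[OF q gm] by simp
qed

definition Cq :: "real \<Rightarrow> real" where
  "Cq q = (if 1 \<le> q then Kq q powr (1/q) * 2 powr (1/q) else Kq q)"

lemma fin_size_bound:
  assumes q: "0 < q" and f: "f \<in> Lp_space (ennreal q) I" and b: "b \<in> Lp_space (ennreal q) I"
    and h: "h \<in> Lp_space (ennreal q) I" and fx: "AE y in M. h y = fcT N xs \<alpha> f b h y"
  shows "Lp_size (ennreal q) I h \<le> Cq q * (Lp_size (ennreal q) I f + Lp_size (ennreal q) I b)"
proof -
  define H where "H = enn2real (nnq q h)"
  define F where "F = enn2real (nnq q f)"
  define B where "B = enn2real (nnq q b)"
  have le: "H \<le> Kq q * (F + B)" unfolding H_def F_def B_def by (rule fin_bound[OF q f b h fx])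
  have F0: "0 \<le> F" and B0: "0 \<le> B" and H0: "0 \<le> H" unfolding F_def B_def H_def by auto
  have K0: "0 < Kq q" by (rule Kq_pos[OF q])
  show ?thesis
  proof (cases "1 \<le> q")
    case True
    have "H powr (1/q) \<le> (Kq q * (F + B)) powr (1/q)" using le H0 q by (intro powr_mono2) auto
    also have "\<dots> = Kq q powr (1/q) * (F + B) powr (1/q)" by (rule powr_mult; use K0 F0 B0 in auto)
    also have "\<dots> \<le> Kq q powr (1/q) * (2 powr (1/q) * (F powr (1/q) + B powr (1/q)))"
      using F0 B0 q by (intro mult_left_mono ineq_two) auto
    finally show ?thesis using True
      unfolding size_fin[OF q f] size_fin[OF q b] size_fin[OF q h] Cq_def H_def[symmetric] F_def[symmetric] B_def[symmetric]
      by (simp add: mult.assoc)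
  next
    case False
    then show ?thesis using le
      unfolding size_fin[OF q f] size_fin[OF q b] size_fin[OF q h] Cq_def H_def[symmetric] F_def[symmetric] B_def[symmetric]
      by simp
  qed
qed

end

theorem theorem3p3:
  fixes p :: ennreal and N :: nat and xs :: "nat \<Rightarrow> real" and \<alpha> :: "nat \<Rightarrow> real \<Rightarrow> real"
  assumes "0 < p"
    and "2 \<le> N"
    and "\<And>n. n < N \<Longrightarrow> xs n < xs (Suc n)"
    and "\<And>n. n \<in> {1..N} \<Longrightarrow> \<alpha> n \<in> borel_measurable (lebesgue_on (Ival N xs))"
    and "\<exists>\<Lambda><1. \<forall>n\<in>{1..N}. AE t in lebesgue_on (Ival N xs). \<bar>\<alpha> n t\<bar> \<le> \<Lambda>"
  shows "(\<forall>f\<in>Lp_space p (Ival N xs). \<forall>b\<in>Lp_space p (Ival N xs).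
            \<forall>f'\<in>Lp_space p (Ival N xs). \<forall>b'\<in>Lp_space p (Ival N xs). \<forall>c d :: real.
            AE y in lebesgue_on (Ival N xs).
              frac_conv p N xs \<alpha> (\<lambda>t. c * f t + d * f' t) (\<lambda>t. c * b t + d * b' t) y
              = c * frac_conv p N xs \<alpha> f b y + d * frac_conv p N xs \<alpha> f' b' y)
       \<and> (\<exists>C. \<forall>f\<in>Lp_space p (Ival N xs). \<forall>b\<in>Lp_space p (Ival N xs).
            frac_conv p N xs \<alpha> f b \<in> Lp_space p (Ival N xs) \<and>
            Lp_size p (Ival N xs) (frac_conv p N xs \<alpha> f b)
              \<le> C * (Lp_size p (Ival N xs) f + Lp_size p (Ival N xs) b))"
proof -
  obtain L0 where L0: "L0 < 1" "\<forall>n\<in>{1..N}. AE t in lebesgue_on (Ival N xs). \<bar>\<alpha> n t\<bar> \<le> L0"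
    using assms(5) by blast
  define L where "L = max L0 (1/2)"
  interpret fcs N xs \<alpha> L
  proof (unfold_locales)
    show "2 \<le> N" by (rule assms(2))
    show "\<And>n. n < N \<Longrightarrow> xs n < xs (Suc n)" by (rule assms(3))
    show "\<And>n. n \<in> {1..N} \<Longrightarrow> \<alpha> n \<in> borel_measurable (lebesgue_on {xs 0..xs N})" by (rule assms(4))
    show "0 < L" "L < 1" unfolding L_def using L0 by auto
    fix n assume "n \<in> {1..N}"
    then have "AE t in lebesgue_on {xs 0..xs N}. \<bar>\<alpha> n t\<bar> \<le> L0" using L0 by auto
    then show "AE t in lebesgue_on {xs 0..xs N}. \<bar>\<alpha> n t\<bar> \<le> L"
      by eventually_elim (auto simp: L_def)
  qed
  show ?thesis
  proof (cases "p = \<infinity>")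
    case True
    have Lpq: "\<And>g. g \<in> Lp_space p I \<Longrightarrow> nnq 1 g < \<infinity>" using Lp_inf_nnq1 True by simp
    have Lpm: "\<And>g. g \<in> Lp_space p I \<Longrightarrow> g \<in> borel_measurable M" using Lp_inf_iff True by simp
    have fx: "\<And>f b. f \<in> Lp_space p I \<Longrightarrow> b \<in> Lp_space p I \<Longrightarrow> frac_conv p N xs \<alpha> f b \<in> Lp_space p I \<and>
         (AE y in M. frac_conv p N xs \<alpha> f b y = fcT N xs \<alpha> f b (frac_conv p N xs \<alpha> f b) y)"
      using inf_fix True by simp
    show ?thesis
    proof (intro conjI ballI allI)
      fix f b f' b' c d assume "f \<in> Lp_space p I" "b \<in> Lp_space p I" "f' \<in> Lp_space p I" "b' \<in> Lp_space p I"
      then show "AE y in M. frac_conv p N xs \<alpha> (\<lambda>t. c * f t + d * f' t) (\<lambda>t. c * b t + d * b' t) y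
              = c * frac_conv p N xs \<alpha> f b y + d * frac_conv p N xs \<alpha> f' b' y"
        by (intro lin[OF zero_less_one assms(1) Lpq Lpm fx])
    next
      show "\<exists>C. \<forall>f\<in>Lp_space p I. \<forall>b\<in>Lp_space p I. frac_conv p N xs \<alpha> f b \<in> Lp_space p I \<and>
            Lp_size p I (frac_conv p N xs \<alpha> f b) \<le> C * (Lp_size p I f + Lp_size p I b)"
        using inf_fix inf_bound True by (intro exI[of _ "1 / (1 - L)"]) auto
    qed
  next
    case False
    define q where "q = enn2real p"
    have pq: "p = ennreal q" and q: "0 < q" using False assms(1) unfolding q_def
      by (cases p; auto)+
    have Lpq: "\<And>g. g \<in> Lp_space p I \<Longrightarrow> nnq q g < \<infinity>" using Lp_fin_iff[OF q] pq by simp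
    have Lpm: "\<And>g. g \<in> Lp_space p I \<Longrightarrow> g \<in> borel_measurable M" using Lp_fin_iff[OF q] pq by simp
    have fx: "\<And>f b. f \<in> Lp_space p I \<Longrightarrow> b \<in> Lp_space p I \<Longrightarrow> frac_conv p N xs \<alpha> f b \<in> Lp_space p I \<and>
         (AE y in M. frac_conv p N xs \<alpha> f b y = fcT N xs \<alpha> f b (frac_conv p N xs \<alpha> f b) y)"
      using fin_fix[OF q] pq by simp
    show ?thesis
    proof (intro conjI ballI allI)
      fix f b f' b' c d assume "f \<in> Lp_space p I" "b \<in> Lp_space p I" "f' \<in> Lp_space p I" "b' \<in> Lp_space p I"
      then show "AE y in M. frac_conv p N xs \<alpha> (\<lambda>t. c * f t + d * f' t) (\<lambda>t. c * b t + d * b' t) y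
              = c * frac_conv p N xs \<alpha> f b y + d * frac_conv p N xs \<alpha> f' b' y"
        by (intro lin[OF q assms(1) Lpq Lpm fx])
    next
      show "\<exists>C. \<forall>f\<in>Lp_space p I. \<forall>b\<in>Lp_space p I. frac_conv p N xs \<alpha> f b \<in> Lp_space p I \<and>
            Lp_size p I (frac_conv p N xs \<alpha> f b) \<le> C * (Lp_size p I f + Lp_size p I b)"
        using fin_fix[OF q] fin_size_bound[OF q] pq by (intro exI[of _ "Cq q"]) auto
    qed
  qed
qed

end
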